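(* Let $M'$ be a matroid of rank $n$ on $[d]$, let $F$ be a flat of $M'$, and let $M=M'+_Fa$ be the principal extension on $[d]\cup\{a\}$. Let $\gamma=(\gamma_p)_{p\in[d]\cup\{a\}}\in V_{\mathcal{C}(M)}$ be a tuple of vectors in $\mathbb{C}^n$ such that the restriction $(\gamma_p)_{p\in[d]}$ lies in $V_{M'}$ and $\dim\operatorname{span}(\gamma_p:p\in F)=\operatorname{rank}_{M'}(F)$. Then $\gamma\in V_M$.
   Context: Principal extension: for $a\notin[d]$, $M'+_Fa$ is the matroid on $[d]\cup\{a\}$ with bases $\mathcal{B}(M')\cup\{(\lambda\setminus\{b\})\cup\{a\}:\lambda\in\mathcal{B}(M'),\ b\in\lambda\cap F\}$ (it has rank $n$). For a matroid $N$ of rank $n$ on a finite set $E$, a realization is a tuple $(\gamma_e)_{e\in E}$ in $\mathbb{C}^n$ with $(\gamma_e)_{e\in S}$ linearly dependent iff $S$ is dependent in $N$; the matroid variety $V_N$ is the Zariski closure of the set of realizations in $(\mathbb{C}^n)^E$; the circuit variety $V_{\mathcal{C}(N)}$ is the set of tuples with $(\gamma_e)_{e\in S}$ linearly dependent for every dependent set $S$ of $N$. *)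

theory Defs
  imports "HOL-Analysis.Analysis"
begin

definition matroid_bases :: "'a set \<Rightarrow> 'a set set \<Rightarrow> bool" where
  "matroid_bases E \<B> \<longleftrightarrow> finite E \<and> \<B> \<noteq> {} \<and> (\<forall>B\<in>\<B>. B \<subseteq> E) \<and>
     (\<forall>B1\<in>\<B>. \<forall>B2\<in>\<B>. \<forall>x\<in>B1 - B2. \<exists>y\<in>B2 - B1. insert y (B1 - {x}) \<in> \<B>)"

definition m_indep :: "'a set set \<Rightarrow> 'a set \<Rightarrow> bool" where
  "m_indep \<B> I \<longleftrightarrow> (\<exists>B\<in>\<B>. I \<subseteq> B)"

definition m_dep :: "'a set \<Rightarrow> 'a set set \<Rightarrow> 'a set \<Rightarrow> bool" where
  "m_dep E \<B> S \<longleftrightarrow> S \<subseteq> E \<and> \<not> m_indep \<B> S"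

definition m_rank :: "'a set set \<Rightarrow> 'a set \<Rightarrow> nat" where
  "m_rank \<B> X = Max (card ` {I. I \<subseteq> X \<and> m_indep \<B> I})"

definition matroid_rank_n :: "'a set \<Rightarrow> 'a set set \<Rightarrow> nat \<Rightarrow> bool" where
  "matroid_rank_n E \<B> n \<longleftrightarrow> matroid_bases E \<B> \<and> (\<forall>B\<in>\<B>. card B = n)"

definition m_flat :: "'a set \<Rightarrow> 'a set set \<Rightarrow> 'a set \<Rightarrow> bool" where
  "m_flat E \<B> F \<longleftrightarrow> F \<subseteq> E \<and> (\<forall>x\<in>E - F. m_rank \<B> (insert x F) > m_rank \<B> F)"

definition principal_ext_bases :: "'a set set \<Rightarrow> 'a set \<Rightarrow> 'a \<Rightarrow> 'a set set" where
  "principal_ext_bases \<B> F a =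
     \<B> \<union> {insert a (L - {b}) | L b. L \<in> \<B> \<and> b \<in> L \<inter> F}"

text \<open>A family (gamma_e) for e in S is linearly dependent over C (repetitions count).\<close>
definition fam_dependent :: "('a \<Rightarrow> complex ^ 'n) \<Rightarrow> 'a set \<Rightarrow> bool" where
  "fam_dependent \<gamma> S \<longleftrightarrow> \<not> (inj_on \<gamma> S \<and> \<not> vec.dependent (\<gamma> ` S))"

text \<open>Points of (C^n)^E are represented as extensional functions on E (value undefined outside E).\<close>
definition config_space :: "'a set \<Rightarrow> ('a \<Rightarrow> complex ^ 'n) set" where
  "config_space E = extensional E"

inductive_set poly_funs :: "'a set \<Rightarrow> (('a \<Rightarrow> complex ^ 'n) \<Rightarrow> complex) set"
  for E :: "'a set" where
  const: "(\<lambda>_. c) \<in> poly_funs E"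
| coord: "e \<in> E \<Longrightarrow> (\<lambda>\<gamma>. \<gamma> e $ i) \<in> poly_funs E"
| add: "p \<in> poly_funs E \<Longrightarrow> q \<in> poly_funs E \<Longrightarrow> (\<lambda>\<gamma>. p \<gamma> + q \<gamma>) \<in> poly_funs E"
| mult: "p \<in> poly_funs E \<Longrightarrow> q \<in> poly_funs E \<Longrightarrow> (\<lambda>\<gamma>. p \<gamma> * q \<gamma>) \<in> poly_funs E"

definition zariski_closed :: "'a set \<Rightarrow> ('a \<Rightarrow> complex ^ 'n) set \<Rightarrow> bool" where
  "zariski_closed E Z \<longleftrightarrow>
     (\<exists>P \<subseteq> poly_funs E. Z = {\<gamma> \<in> config_space E. \<forall>p\<in>P. p \<gamma> = 0})"

definition zariski_closure :: "'a set \<Rightarrow> ('a \<Rightarrow> complex ^ 'n) set \<Rightarrow> ('a \<Rightarrow> complex ^ 'n) set" where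
  "zariski_closure E S = \<Inter>{Z. zariski_closed E Z \<and> S \<subseteq> Z}"

definition is_realization :: "'a set \<Rightarrow> 'a set set \<Rightarrow> ('a \<Rightarrow> complex ^ 'n) \<Rightarrow> bool" where
  "is_realization E \<B> \<gamma> \<longleftrightarrow> \<gamma> \<in> config_space E \<and>
     (\<forall>S \<subseteq> E. fam_dependent \<gamma> S \<longleftrightarrow> m_dep E \<B> S)"

definition matroid_variety :: "'a set \<Rightarrow> 'a set set \<Rightarrow> ('a \<Rightarrow> complex ^ 'n) set" where
  "matroid_variety E \<B> = zariski_closure E {\<gamma>. is_realization E \<B> \<gamma>}"

definition circuit_variety :: "'a set \<Rightarrow> 'a set set \<Rightarrow> ('a \<Rightarrow> complex ^ 'n) set" where
  "circuit_variety E \<B> = {\<gamma> \<in> config_space E. \<forall>S. m_dep E \<B> S \<longrightarrow> fam_dependent \<gamma> S}"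

end

theory Submission imports Defs "HOL-Computational_Algebra.Polynomial"
begin

lemma fam_dep_insert:
  assumes "a \<notin> T"
  shows "fam_dependent g (insert a T) \<longleftrightarrow> fam_dependent g T \<or> g a \<in> vec.span (g ` T)"
proof -
  have "inj_on g (insert a T) \<longleftrightarrow> inj_on g T \<and> g a \<notin> g ` T" using assms by auto
  moreover have "inj_on g T \<Longrightarrow> g a \<notin> g ` T \<Longrightarrow>
     vec.dependent (g ` insert a T) \<longleftrightarrow> vec.dependent (g ` T) \<or> g a \<in> vec.span (g ` T)"
    using vec.independent_insert[of "g a" "g ` T"] by auto
  moreover have "g a \<in> g ` T \<Longrightarrow> g a \<in> vec.span (g ` T)" by (simp add: vec.span_base)
  ultimately show ?thesis unfolding fam_dependent_def by blast
qed

lemma fam_dep_cong: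
  "(\<And>x. x \<in> S \<Longrightarrow> g x = h x) \<Longrightarrow> fam_dependent g S \<longleftrightarrow> fam_dependent h S"
  unfolding fam_dependent_def by (metis image_cong inj_on_cong)

lemma poly_funs_sum:
  assumes "finite K" "\<And>k. k \<in> K \<Longrightarrow> g k \<in> poly_funs E"
  shows "(\<lambda>x. \<Sum>k\<in>K. g k x) \<in> poly_funs E"
  using assms
proof (induction K rule: finite_induct)
  case empty
  then show ?case using poly_funs.const[of 0 E] by simp
next
  case (insert k K)
  then show ?case using poly_funs.add[of "g k" E "\<lambda>x. \<Sum>k\<in>K. g k x"] by simp
qed

lemma poly_funs_line:
  assumes "p \<in> poly_funs E"
  shows "\<exists>P. \<forall>t. p (\<lambda>e. g0 e + t *s g1 e) = poly P t"
  using assms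
proof (induction rule: poly_funs.induct)
  case (const c)
  then show ?case by (intro exI[of _ "[:c:]"]) simp
next
  case (coord e i)
  then show ?case by (intro exI[of _ "[:g0 e $ i, g1 e $ i:]"]) (simp add: algebra_simps)
next
  case (add p q)
  then obtain P Q where "\<forall>t. p (\<lambda>e. g0 e + t *s g1 e) = poly P t" "\<forall>t. q (\<lambda>e. g0 e + t *s g1 e) = poly Q t" by blast
  then show ?case by (intro exI[of _ "P + Q"]) simp
next
  case (mult p q)
  then obtain P Q where "\<forall>t. p (\<lambda>e. g0 e + t *s g1 e) = poly P t" "\<forall>t. q (\<lambda>e. g0 e + t *s g1 e) = poly Q t" by blast
  then show ?case by (intro exI[of _ "P * Q"]) simp
qed

lemma poly_funs_subst:
  assumes "p \<in> poly_funs E" "E = insert a D" "finite K" "K \<subseteq> D" "a \<notin> D"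
  shows "(\<lambda>\<delta>. p (\<delta>(a := \<Sum>k\<in>K. c k *s \<delta> k))) \<in> poly_funs D"
  using assms(1)
proof (induction rule: poly_funs.induct)
  case (const c)
  then show ?case by (rule poly_funs.const)
next
  case (coord e i)
  show ?case
  proof (cases "e = a")
    case True
    have "(\<lambda>\<delta>. \<Sum>k\<in>K. c k * \<delta> k $ i) \<in> poly_funs D"
      apply (rule poly_funs_sum[OF assms(3)])
      apply (rule poly_funs.mult[OF poly_funs.const poly_funs.coord])
      using assms(4) by auto
    then show ?thesis using True by simp
  next
    case False
    then have "e \<in> D" using coord assms(2) by auto
    then show ?thesis using False poly_funs.coord[of e D i] by simp
  qed
next
  case (add p q)
  then show ?case using poly_funs.add by blast
next
  case (mult p q)
  then show ?case using poly_funs.mult by blast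
qed

lemma line_subspace_finite:
  fixes W :: "(complex ^ 'n) set"
  assumes "vec.subspace W" "w \<notin> W \<or> v \<notin> W"
  shows "finite {t. v + t *s (w - v) \<in> W}"
proof -
  have "t1 = t2" if "v + t1 *s (w - v) \<in> W" "v + t2 *s (w - v) \<in> W" for t1 t2
  proof (rule ccontr)
    assume ne: "t1 \<noteq> t2"
    have "(v + t1 *s (w - v)) - (v + t2 *s (w - v)) \<in> W"
      using that assms(1) vec.subspace_diff by blast
    then have "(t1 - t2) *s (w - v) \<in> W" by (simp add: algebra_simps vec.scale_left_diff_distrib)
    then have "inverse (t1 - t2) *s ((t1 - t2) *s (w - v)) \<in> W" using assms(1) vec.subspace_scale by blast
    then have u: "w - v \<in> W" using ne by (simp only: vec.scale_scale) simp
    then have "t1 *s (w - v) \<in> W" using assms(1) vec.subspace_scale by blast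
    then have "v \<in> W" using that(1) assms(1) vec.subspace_diff by fastforce
    then have "w \<in> W" using u assms(1) vec.subspace_add by fastforce
    then show False using assms(2) \<open>v \<in> W\<close> by blast
  qed
  then have "{t. v + t *s (w - v) \<in> W} \<subseteq> {t. v + t *s (w - v) \<in> W} \<and> (\<forall>x\<in>{t. v + t *s (w - v) \<in> W}. \<forall>y\<in>{t. v + t *s (w - v) \<in> W}. x = y)"
    by blast
  then show ?thesis by (metis (no_types, lifting) finite.simps insert_absorb is_singletonI' is_singleton_the_elem)
qed

lemma avoid_subspaces:
  fixes U :: "(complex ^ 'n) set"
  assumes "finite WW" "vec.subspace U" "\<forall>W\<in>WW. vec.subspace W \<and> \<not> U \<subseteq> W"
  shows "\<exists>w\<in>U. w \<notin> \<Union>WW"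
  using assms
proof (induction WW rule: finite_induct)
  case empty
  then show ?case using vec.subspace_0 by auto
next
  case (insert W WW)
  then obtain y where y: "y \<in> U" "y \<notin> \<Union>WW" by auto
  from insert obtain z where z: "z \<in> U" "z \<notin> W" by auto
  have fin: "finite (\<Union>W'\<in>insert W WW. {t. y + t *s (z - y) \<in> W'})"
  proof (rule finite_UN_I)
    show "finite (insert W WW)" using insert by simp
    fix W' assume "W' \<in> insert W WW"
    then show "finite {t. y + t *s (z - y) \<in> W'}"
      using line_subspace_finite[of W' z y] insert y z by auto
  qed
  have "infinite (UNIV :: complex set)" by (rule infinite_UNIV_char_0)
  then obtain t where t: "t \<notin> (\<Union>W'\<in>insert W WW. {t. y + t *s (z - y) \<in> W'})"
    using fin by (metis ex_new_if_finite)
  have "y + t *s (z - y) \<in> U"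
    using y z insert(4) by (simp add: vec.subspace_add vec.subspace_diff vec.subspace_scale)
  then show ?case using t by blast
qed

lemma indep_ext_noa:
  assumes "a \<notin> S"
  shows "m_indep (principal_ext_bases B' F a) S \<longleftrightarrow> m_indep B' S"
  using assms unfolding m_indep_def principal_ext_bases_def by blast

lemma indep_ext_a:
  assumes "a \<notin> T" "\<forall>L\<in>B'. a \<notin> L"
  shows "m_indep (principal_ext_bases B' F a) (insert a T) \<longleftrightarrow> (\<exists>L\<in>B'. \<exists>b\<in>L\<inter>F. T \<subseteq> L - {b})"
proof
  assume "m_indep (principal_ext_bases B' F a) (insert a T)"
  then obtain L' where L': "L' \<in> principal_ext_bases B' F a" "insert a T \<subseteq> L'" unfolding m_indep_def by blast
  then show "\<exists>L\<in>B'. \<exists>b\<in>L\<inter>F. T \<subseteq> L - {b}"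
    using assms unfolding principal_ext_bases_def by blast
next
  assume "\<exists>L\<in>B'. \<exists>b\<in>L\<inter>F. T \<subseteq> L - {b}"
  then obtain L b where "L \<in> B'" "b \<in> L \<inter> F" "T \<subseteq> L - {b}" by blast
  then show "m_indep (principal_ext_bases B' F a) (insert a T)"
    unfolding m_indep_def principal_ext_bases_def by blast
qed

lemma realize_ext:
  assumes real: "is_realization D B' \<delta>" and D: "a \<notin> D" "F \<subseteq> D" "\<forall>L\<in>B'. L \<subseteq> D"
    and v: "v \<in> vec.span (\<delta> ` F)"
    and gen: "\<forall>S. S \<subseteq> D \<and> \<not> \<delta> ` F \<subseteq> vec.span (\<delta> ` S) \<longrightarrow> v \<notin> vec.span (\<delta> ` S)"
  shows "is_realization (insert a D) (principal_ext_bases B' F a) (\<delta>(a := v))"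
  unfolding is_realization_def
proof (intro conjI allI impI)
  show "\<delta>(a := v) \<in> config_space (insert a D)"
    using real unfolding is_realization_def config_space_def extensional_def by auto
  have rD: "\<And>S. S \<subseteq> D \<Longrightarrow> fam_dependent \<delta> S \<longleftrightarrow> m_dep D B' S"
    using real unfolding is_realization_def by blast
  fix S assume S: "S \<subseteq> insert a D"
  show "fam_dependent (\<delta>(a := v)) S \<longleftrightarrow> m_dep (insert a D) (principal_ext_bases B' F a) S"
  proof (cases "a \<in> S")
    case False
    then have SD: "S \<subseteq> D" using S by auto
    have "fam_dependent (\<delta>(a := v)) S \<longleftrightarrow> fam_dependent \<delta> S"
      by (rule fam_dep_cong) (use False in auto)
    also have "\<dots> \<longleftrightarrow> m_dep D B' S" using rD SD by blast
    also have "\<dots> \<longleftrightarrow> m_dep (insert a D) (principal_ext_bases B' F a) S"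
      unfolding m_dep_def using indep_ext_noa[OF False] SD by blast
    finally show ?thesis .
  next
    case True
    define T where "T = S - {a}"
    have ST: "S = insert a T" and aT: "a \<notin> T" and TD: "T \<subseteq> D" using True S by (auto simp: T_def)
    have "fam_dependent (\<delta>(a := v)) (insert a T) \<longleftrightarrow> fam_dependent (\<delta>(a := v)) T \<or> v \<in> vec.span ((\<delta>(a := v)) ` T)"
      using fam_dep_insert[OF aT, of "\<delta>(a := v)"] by (simp only: fun_upd_same)
    also have "\<dots> \<longleftrightarrow> fam_dependent \<delta> T \<or> v \<in> vec.span (\<delta> ` T)"
    proof -
      have "(\<delta>(a := v)) ` T = \<delta> ` T" using aT by auto
      moreover have "fam_dependent (\<delta>(a := v)) T \<longleftrightarrow> fam_dependent \<delta> T"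
        by (rule fam_dep_cong) (use aT in auto)
      ultimately show ?thesis by simp
    qed
    also have "\<dots> \<longleftrightarrow> \<not> (\<exists>L\<in>B'. \<exists>b\<in>L\<inter>F. T \<subseteq> L - {b})"
    proof
      assume "fam_dependent \<delta> T \<or> v \<in> vec.span (\<delta> ` T)"
      show "\<not> (\<exists>L\<in>B'. \<exists>b\<in>L\<inter>F. T \<subseteq> L - {b})"
      proof
        assume "\<exists>L\<in>B'. \<exists>b\<in>L\<inter>F. T \<subseteq> L - {b}"
        then obtain L b where Lb: "L \<in> B'" "b \<in> L \<inter> F" "T \<subseteq> L - {b}" by blast
        have bT: "b \<notin> T" using Lb by blast
        have "m_indep B' (insert b T)" unfolding m_indep_def using Lb by blast
        moreover have "insert b T \<subseteq> D" using Lb D TD by blast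
        ultimately have "\<not> fam_dependent \<delta> (insert b T)" using rD unfolding m_dep_def by blast
        then have nd: "\<not> fam_dependent \<delta> T" and nb: "\<delta> b \<notin> vec.span (\<delta> ` T)"
          using fam_dep_insert[OF bT] by auto
        have "\<not> \<delta> ` F \<subseteq> vec.span (\<delta> ` T)" using nb Lb by blast
        then have "v \<notin> vec.span (\<delta> ` T)" using gen TD by simp
        then show False using nd \<open>fam_dependent \<delta> T \<or> v \<in> vec.span (\<delta> ` T)\<close> by blast
      qed
    next
      assume H: "\<not> (\<exists>L\<in>B'. \<exists>b\<in>L\<inter>F. T \<subseteq> L - {b})"
      show "fam_dependent \<delta> T \<or> v \<in> vec.span (\<delta> ` T)"
      proof (rule ccontr)
        assume "\<not> (fam_dependent \<delta> T \<or> v \<in> vec.span (\<delta> ` T))"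
        then have nd: "\<not> fam_dependent \<delta> T" and nv: "v \<notin> vec.span (\<delta> ` T)" by auto
        have "\<not> \<delta> ` F \<subseteq> vec.span (\<delta> ` T)"
        proof
          assume "\<delta> ` F \<subseteq> vec.span (\<delta> ` T)"
          then have "vec.span (\<delta> ` F) \<subseteq> vec.span (\<delta> ` T)" by (rule vec.span_minimal) (rule vec.subspace_span)
          then show False using nv v by blast
        qed
        then obtain b where b: "b \<in> F" "\<delta> b \<notin> vec.span (\<delta> ` T)" by blast
        then have bT: "b \<notin> T" using vec.span_base by blast
        have "\<not> fam_dependent \<delta> (insert b T)" using fam_dep_insert[OF bT] nd b by blast
        moreover have "insert b T \<subseteq> D" using b D TD by blast
        ultimately have "m_indep B' (insert b T)" using rD unfolding m_dep_def by blast
        then obtain L where "L \<in> B'" "insert b T \<subseteq> L" unfolding m_indep_def by blast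
        then show False using H b bT by blast
      qed
    qed
    also have "\<dots> \<longleftrightarrow> m_dep (insert a D) (principal_ext_bases B' F a) (insert a T)"
    proof -
      have "\<forall>L\<in>B'. a \<notin> L" using D by blast
      moreover have "insert a T \<subseteq> insert a D" using TD by blast
      ultimately show ?thesis unfolding m_dep_def using indep_ext_a[OF aT, of B' F] by simp
    qed
    finally show ?thesis using ST by simp
  qed
qed

lemma vanish_ext:
  assumes real: "is_realization D B' \<delta>" and D: "a \<notin> D" "F \<subseteq> D" "\<forall>L\<in>B'. L \<subseteq> D" "finite D"
    and p: "p \<in> poly_funs (insert a D)"
    and pv: "\<And>g. is_realization (insert a D) (principal_ext_bases B' F a) g \<Longrightarrow> p g = 0"
    and v: "v \<in> vec.span (\<delta> ` F)"
  shows "p (\<delta>(a := v)) = 0"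
proof -
  define WW where "WW = (\<lambda>S. vec.span (\<delta> ` S)) ` {S. S \<subseteq> D \<and> \<not> \<delta> ` F \<subseteq> vec.span (\<delta> ` S)}"
  have finWW: "finite WW" unfolding WW_def using D(4) by (intro finite_imageI) (rule finite_subset[of _ "Pow D"], auto)
  have "\<forall>W\<in>WW. vec.subspace W \<and> \<not> vec.span (\<delta> ` F) \<subseteq> W"
    unfolding WW_def using vec.span_superset[of "\<delta> ` F"] by (auto simp: vec.subspace_span)
  then obtain w where w: "w \<in> vec.span (\<delta> ` F)" "w \<notin> \<Union>WW"
    using avoid_subspaces[OF finWW vec.subspace_span] by blast
  define bad where "bad = (\<Union>W\<in>WW. {t. v + t *s (w - v) \<in> W})"
  have finbad: "finite bad" unfolding bad_def
  proof (rule finite_UN_I[OF finWW])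
    fix W assume "W \<in> WW"
    then show "finite {t. v + t *s (w - v) \<in> W}"
      using line_subspace_finite[of W w v] w unfolding WW_def by (auto simp: vec.subspace_span)
  qed
  define g0 where "g0 = \<delta>(a := v)"
  define g1 where "g1 = (\<lambda>_. 0 :: complex ^ 'b)(a := w - v)"
  have geq: "(\<lambda>e. g0 e + t *s g1 e) = \<delta>(a := v + t *s (w - v))" for t
    unfolding g0_def g1_def by (rule ext) simp
  obtain P where P: "\<And>t. p (\<lambda>e. g0 e + t *s g1 e) = poly P t"
    using poly_funs_line[OF p, of g0 g1] by blast
  have root: "poly P t = 0" if "t \<notin> bad" for t
  proof -
    let ?u = "v + t *s (w - v)"
    have uF: "?u \<in> vec.span (\<delta> ` F)" using v w
      by (simp add: vec.span_add vec.span_diff vec.span_scale)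
    have "\<forall>S. S \<subseteq> D \<and> \<not> \<delta> ` F \<subseteq> vec.span (\<delta> ` S) \<longrightarrow> ?u \<notin> vec.span (\<delta> ` S)"
      using that unfolding bad_def WW_def by blast
    then have "is_realization (insert a D) (principal_ext_bases B' F a) (\<delta>(a := ?u))"
      using realize_ext[OF real D(1-3) uF] by blast
    then show ?thesis using pv P[of t] geq[of t] by simp
  qed
  have "P = 0"
  proof (rule ccontr)
    assume "P \<noteq> 0"
    then have "finite {t. poly P t = 0}" by (rule poly_roots_finite)
    moreover have "- bad \<subseteq> {t. poly P t = 0}" using root by blast
    ultimately have "finite (- bad)" by (rule finite_subset[rotated])
    then have "finite (UNIV :: complex set)" using finbad
      by (metis Compl_partition2 finite_Un)
    then show False using infinite_UNIV_char_0 by blast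
  qed
  then have "p (\<lambda>e. g0 e + 0 *s g1 e) = 0" using P[of 0] by simp
  moreover have "v + 0 *s (w - v) = v" by simp
  ultimately show ?thesis using geq[of 0] by metis
qed

theorem lemma8p4:
  fixes d n :: nat and a :: nat and \<B>' :: "nat set set" and F :: "nat set"
    and \<gamma> :: "nat \<Rightarrow> complex ^ 'n"
  assumes "CARD('n) = n"
    and "matroid_rank_n {1..d} \<B>' n"
    and "m_flat {1..d} \<B>' F"
    and "a \<notin> {1..d}"
    and "\<gamma> \<in> circuit_variety (insert a {1..d}) (principal_ext_bases \<B>' F a)"
    and "restrict \<gamma> {1..d} \<in> matroid_variety {1..d} \<B>'"
    and "vec.dim (\<gamma> ` F) = m_rank \<B>' F"
  shows "\<gamma> \<in> matroid_variety (insert a {1..d}) (principal_ext_bases \<B>' F a)"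
proof -
  define D :: "nat set" where "D = {1..d}"
  define E where "E = insert a D"
  define Bm where "Bm = principal_ext_bases \<B>' F a"
  have finD: "finite D" unfolding D_def by simp
  have aD: "a \<notin> D" using assms(4) unfolding D_def .
  have BD: "\<forall>L\<in>\<B>'. L \<subseteq> D" using assms(2) unfolding matroid_rank_n_def matroid_bases_def D_def by blast
  have FD: "F \<subseteq> D" using assms(3) unfolding m_flat_def D_def by blast
  have finF: "finite F" using finite_subset[OF FD finD] .
  have gconf: "\<gamma> \<in> config_space E" and circ: "\<And>S. m_dep E Bm S \<Longrightarrow> fam_dependent \<gamma> S"
    using assms(5) unfolding circuit_variety_def E_def Bm_def D_def by auto
  obtain Bv where Bv: "Bv \<subseteq> \<gamma> ` F" "vec.independent Bv" "\<gamma> ` F \<subseteq> vec.span Bv" "card Bv = vec.dim (\<gamma> ` F)"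
    using vec.basis_exists[of "\<gamma> ` F"] by blast
  obtain J where J: "J \<subseteq> F" "inj_on \<gamma> J" "Bv = \<gamma> ` J"
    using Bv(1) subset_image_inj by metis
  have finJ: "finite J" using finite_subset[OF J(1) finF] .
  have "card J = card Bv" using card_image[OF J(2)] J(3) by simp
  then have cardJ: "card J = m_rank \<B>' F" using Bv(4) assms(7) by simp
  have "m_dep E Bm (insert a J)"
    unfolding m_dep_def
  proof
    show "insert a J \<subseteq> E" using J FD unfolding E_def by blast
    show "\<not> m_indep Bm (insert a J)"
    proof
      assume "m_indep Bm (insert a J)"
      moreover have "a \<notin> J" using J FD aD by blast
      moreover have "\<forall>L\<in>\<B>'. a \<notin> L" using BD aD by blast
      ultimately have "\<exists>L\<in>\<B>'. \<exists>b\<in>L\<inter>F. J \<subseteq> L - {b}"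
        using indep_ext_a[of a J \<B>' F] unfolding Bm_def by simp
      then obtain L b where Lb: "L \<in> \<B>'" "b \<in> L \<inter> F" "J \<subseteq> L - {b}" by blast
      have bJ: "b \<notin> J" using Lb(3) by blast
      have IF: "insert b J \<subseteq> F" using Lb(2) J(1) by blast
      have IL: "insert b J \<subseteq> L" using Lb(2,3) by blast
      have "m_indep \<B>' (insert b J)" unfolding m_indep_def using Lb(1) IL by blast
      then have I: "insert b J \<in> {I. I \<subseteq> F \<and> m_indep \<B>' I}" using IF by simp
      have "{I. I \<subseteq> F \<and> m_indep \<B>' I} \<subseteq> Pow F" by blast
      then have "finite {I. I \<subseteq> F \<and> m_indep \<B>' I}" using finF by (simp add: finite_subset)
      then have "card (insert b J) \<le> Max (card ` {I. I \<subseteq> F \<and> m_indep \<B>' I})"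
        by (intro Max_ge finite_imageI imageI I)
      then have "card (insert b J) \<le> m_rank \<B>' F" unfolding m_rank_def .
      moreover have "card (insert b J) = Suc (card J)" using finJ bJ by simp
      ultimately show False using cardJ by simp
    qed
  qed
  then have "fam_dependent \<gamma> (insert a J)" by (rule circ)
  moreover have "a \<notin> J" using J FD aD by blast
  moreover have "\<not> fam_dependent \<gamma> J" using J(2,3) Bv(2) unfolding fam_dependent_def by simp
  ultimately have "\<gamma> a \<in> vec.span (\<gamma> ` J)" using fam_dep_insert[of a J \<gamma>] by simp
  moreover have "vec.span (\<gamma> ` J) = range (\<lambda>u. \<Sum>v\<in>\<gamma> ` J. u v *s v)"
    using finJ by (intro vec.span_finite finite_imageI)
  ultimately obtain u where u: "\<gamma> a = (\<Sum>v\<in>\<gamma> ` J. u v *s v)" by auto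
  define c where "c j = u (\<gamma> j)" for j
  have ga: "\<gamma> a = (\<Sum>j\<in>J. c j *s \<gamma> j)"
    unfolding u c_def using sum.reindex[OF J(2), of "\<lambda>v. u v *s v"] by simp
  define \<gamma>' where "\<gamma>' = restrict \<gamma> D"
  have geq: "\<gamma> = \<gamma>'(a := (\<Sum>j\<in>J. c j *s \<gamma>' j))"
  proof (rule ext)
    fix e
    have s: "(\<Sum>j\<in>J. c j *s \<gamma>' j) = (\<Sum>j\<in>J. c j *s \<gamma> j)"
      using J FD unfolding \<gamma>'_def by (intro sum.cong) auto
    show "\<gamma> e = (\<gamma>'(a := (\<Sum>j\<in>J. c j *s \<gamma>' j))) e"
      using gconf ga s unfolding \<gamma>'_def config_space_def extensional_def E_def
      by (cases "e = a") auto
  qed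
  show ?thesis
    unfolding matroid_variety_def zariski_closure_def
  proof (intro InterI, clarify)
    fix Z :: "(nat \<Rightarrow> complex ^ 'n) set" assume Zc: "zariski_closed (insert a {1..d}) Z"
      and RZ: "{g. is_realization (insert a {1..d}) (principal_ext_bases \<B>' F a) g} \<subseteq> Z"
    obtain P where P: "P \<subseteq> poly_funs E" "Z = {g \<in> config_space E. \<forall>p\<in>P. p g = 0}"
      using Zc unfolding zariski_closed_def E_def D_def by blast
    have "\<forall>p\<in>P. p \<gamma> = 0"
    proof
      fix p assume pP: "p \<in> P"
      have pv: "\<And>g :: nat \<Rightarrow> complex ^ 'n. is_realization (insert a D) (principal_ext_bases \<B>' F a) g \<Longrightarrow> p g = 0"
      proof -
        fix g :: "nat \<Rightarrow> complex ^ 'n" assume "is_realization (insert a D) (principal_ext_bases \<B>' F a) g"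
        then have "g \<in> Z" using RZ unfolding D_def by blast
        then show "p g = 0" using P(2) pP by simp
      qed
      define q where "q = (\<lambda>\<delta>. p (\<delta>(a := \<Sum>j\<in>J. c j *s \<delta> j)))"
      have qpoly: "q \<in> poly_funs D"
      proof -
        have "p \<in> poly_funs E" using P(1) pP by blast
        moreover have "J \<subseteq> D" using J(1) FD by blast
        ultimately show ?thesis unfolding q_def using poly_funs_subst[of p E a D J c] E_def finJ aD by simp
      qed
      let ?Z' = "{g \<in> config_space D. q g = 0}"
      have c1: "zariski_closed D ?Z'" unfolding zariski_closed_def
        by (rule exI[of _ "{q}"]) (use qpoly in auto)
      have c2: "{g. is_realization D \<B>' g} \<subseteq> ?Z'"
      proof clarify
        fix \<delta> :: "nat \<Rightarrow> complex ^ 'n" assume r: "is_realization D \<B>' \<delta>"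
        have "(\<Sum>j\<in>J. c j *s \<delta> j) \<in> vec.span (\<delta> ` F)"
          using J(1) by (intro vec.span_sum vec.span_scale vec.span_base) auto
        moreover have "p \<in> poly_funs (insert a D)" using P(1) pP unfolding E_def by blast
        ultimately have "q \<delta> = 0" unfolding q_def
          using vanish_ext[OF r aD FD BD finD, of p] pv by blast
        then show "\<delta> \<in> config_space D \<and> q \<delta> = 0" using r unfolding is_realization_def by blast
      qed
      have c3: "\<gamma>' \<in> \<Inter>{Z. zariski_closed D Z \<and> {g. is_realization D \<B>' g} \<subseteq> Z}"
        using assms(6) unfolding matroid_variety_def zariski_closure_def \<gamma>'_def D_def .
      have "?Z' \<in> {Z. zariski_closed D Z \<and> {g. is_realization D \<B>' g} \<subseteq> Z}"
        by (intro CollectI conjI c1 c2)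
      with c3 have "\<gamma>' \<in> ?Z'" by (rule InterD)
      then have "q \<gamma>' = 0" by blast
      then show "p \<gamma> = 0" unfolding q_def using geq by simp
    qed
    then show "\<gamma> \<in> Z" using P(2) gconf by simp
  qed
qed

end
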